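(* Let $\Omega\subseteq\mathbb{C}$ be a domain with $\Omega=\{\bar z:z\in\Omega\}$, $\Omega^+=\Omega\cap\{\mathrm{Im}z>0\}$, $\Omega^-=\Omega\cap\{\mathrm{Im}z<0\}$, $I=\Omega\cap\mathbb{R}$. Let $\mathcal P$ be a totally geodesic vertical plane of $\mathbb{H}^2\times\mathbb{R}$ (the product of a geodesic of $\mathbb{H}^2$ with $\mathbb{R}$) and $\sigma$ the isometric reflection of $\mathbb{H}^2\times\mathbb{R}$ across $\mathcal P$. Let $\psi:\Omega^+\cup I\to\mathbb{H}^2\times\mathbb{R}$ be a conformal $C^2$ immersion with regular vertical projection and constant mean curvature $1/2$, such that $\psi(I)\subset\mathcal P$ and the unit normal $\eta$ of $\psi$ is tangent to $\mathcal P$ along $I$. Then the map defined by $\psi(z)$ for $z\in\Omega^+\cup I$ and $\sigma(\psi(\bar z))$ for $z\in\Omega^-$ is a conformal immersion $\Omega\to\mathbb{H}^2\times\mathbb{R}$ with constant mean curvature $1/2$.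
   Context: $\mathbb{H}^2\times\mathbb{R}\subset\mathbb{L}^4=(\mathbb{R}^4,-dx_0^2+dx_1^2+dx_2^2+dx_3^2)$, $\mathbb{H}^2=\{-x_0^2+x_1^2+x_2^2=-1,x_0>0\}$. For a conformal immersion $\psi=(N,h)$, $\eta=(\hat N,u)$ denotes the unit normal tangent to $\mathbb{H}^2\times\mathbb{R}$; regular vertical projection means $u\ne0$ everywhere, and the mean curvature is taken with respect to the orientation $u>0$. *)

theory Defs
  imports "HOL-Analysis.Analysis"
begin

type_synonym L3 = "real \<times> real \<times> real"
type_synonym L4 = "L3 \<times> real"

definition lor3 :: "L3 \<Rightarrow> L3 \<Rightarrow> real" where
  "lor3 a b = (case a of (a0,a1,a2) \<Rightarrow> case b of (b0,b1,b2) \<Rightarrow> - a0*b0 + a1*b1 + a2*b2)"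

definition lor4 :: "L4 \<Rightarrow> L4 \<Rightarrow> real" where
  "lor4 p q = lor3 (fst p) (fst q) + snd p * snd q"

definition H2R :: "L4 set" where
  "H2R = {(N,h). lor3 N N = -1 \<and> fst N > 0}"

text \<open>Totally geodesic vertical plane: (geodesic of H^2 cut out by a spacelike unit
  vector n of L^3) times R, and the reflection across it.\<close>
definition vplane :: "L3 \<Rightarrow> L4 set" where
  "vplane n = {p \<in> H2R. lor3 (fst p) n = 0}"

definition vrefl :: "L3 \<Rightarrow> L4 \<Rightarrow> L4" where
  "vrefl n p = (fst p - (2 * lor3 (fst p) n) *\<^sub>R n, snd p)"

definition C2_partials ::
  "complex set \<Rightarrow> (complex \<Rightarrow> L4) \<Rightarrow> (complex \<Rightarrow> L4) \<Rightarrow> (complex \<Rightarrow> L4)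
   \<Rightarrow> (complex \<Rightarrow> L4) \<Rightarrow> (complex \<Rightarrow> L4) \<Rightarrow> (complex \<Rightarrow> L4) \<Rightarrow> (complex \<Rightarrow> L4) \<Rightarrow> bool" where
  "C2_partials S \<psi> \<psi>x \<psi>y \<psi>xx \<psi>xy \<psi>yx \<psi>yy \<longleftrightarrow>
     continuous_on S \<psi> \<and> continuous_on S \<psi>x \<and> continuous_on S \<psi>y \<and>
     continuous_on S \<psi>xx \<and> continuous_on S \<psi>xy \<and> continuous_on S \<psi>yx \<and> continuous_on S \<psi>yy \<and>
     (\<forall>z\<in>S. (\<psi> has_derivative (\<lambda>w. Re w *\<^sub>R \<psi>x z + Im w *\<^sub>R \<psi>y z)) (at z within S) \<and>
             (\<psi>x has_derivative (\<lambda>w. Re w *\<^sub>R \<psi>xx z + Im w *\<^sub>R \<psi>xy z)) (at z within S) \<and>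
             (\<psi>y has_derivative (\<lambda>w. Re w *\<^sub>R \<psi>yx z + Im w *\<^sub>R \<psi>yy z)) (at z within S))"

definition conformal_immersion ::
  "complex set \<Rightarrow> (complex \<Rightarrow> L4) \<Rightarrow> (complex \<Rightarrow> L4) \<Rightarrow> (complex \<Rightarrow> L4) \<Rightarrow> bool" where
  "conformal_immersion S \<psi> \<psi>x \<psi>y \<longleftrightarrow>
     (\<forall>z\<in>S. \<psi> z \<in> H2R \<and> lor4 (\<psi>x z) (\<psi>x z) = lor4 (\<psi>y z) (\<psi>y z) \<and>
             lor4 (\<psi>x z) (\<psi>y z) = 0 \<and> lor4 (\<psi>x z) (\<psi>x z) > 0)"

text \<open>eta = (hat N, u) is a unit normal of the surface at the point p = (N,h), tangent
  to H^2 x R, the surface having tangent vectors v1, v2.\<close>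
definition unit_normal :: "L4 \<Rightarrow> L4 \<Rightarrow> L4 \<Rightarrow> L4 \<Rightarrow> bool" where
  "unit_normal p v1 v2 \<eta> \<longleftrightarrow>
     lor3 (fst \<eta>) (fst p) = 0 \<and> lor4 \<eta> v1 = 0 \<and> lor4 \<eta> v2 = 0 \<and> lor4 \<eta> \<eta> = 1"

definition regular_vertical_projection ::
  "complex set \<Rightarrow> (complex \<Rightarrow> L4) \<Rightarrow> (complex \<Rightarrow> L4) \<Rightarrow> (complex \<Rightarrow> L4) \<Rightarrow> bool" where
  "regular_vertical_projection S \<psi> \<psi>x \<psi>y \<longleftrightarrow>
     (\<forall>z\<in>S. \<forall>\<eta>. unit_normal (\<psi> z) (\<psi>x z) (\<psi>y z) \<eta> \<longrightarrow> snd \<eta> \<noteq> 0)"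

definition cmc_half ::
  "complex set \<Rightarrow> (complex \<Rightarrow> L4) \<Rightarrow> (complex \<Rightarrow> L4) \<Rightarrow> (complex \<Rightarrow> L4)
   \<Rightarrow> (complex \<Rightarrow> L4) \<Rightarrow> (complex \<Rightarrow> L4) \<Rightarrow> bool" where
  "cmc_half S \<psi> \<psi>x \<psi>y \<psi>xx \<psi>yy \<longleftrightarrow>
     (\<forall>z\<in>S. \<exists>\<eta>. unit_normal (\<psi> z) (\<psi>x z) (\<psi>y z) \<eta> \<and> snd \<eta> > 0 \<and>
        lor4 (\<psi>xx z + \<psi>yy z) \<eta> / (2 * lor4 (\<psi>x z) (\<psi>x z)) = 1/2)"

end

theory Submission
  imports Defs
begin

lemma lor3_alt: "lor3 a b = - fst a * fst b + fst (snd a) * fst (snd b) + snd (snd a) * snd (snd b)"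
  by (simp add: lor3_def split: prod.splits)

lemma lor3_sym: "lor3 a b = lor3 b a" by (simp add: lor3_alt algebra_simps)
lemma lor3_add1[simp]: "lor3 (a + b) c = lor3 a c + lor3 b c" by (simp add: lor3_alt algebra_simps)
lemma lor3_add2[simp]: "lor3 c (a + b) = lor3 c a + lor3 c b" by (simp add: lor3_alt algebra_simps)
lemma lor3_diff1[simp]: "lor3 (a - b) c = lor3 a c - lor3 b c" by (simp add: lor3_alt algebra_simps)
lemma lor3_diff2[simp]: "lor3 c (a - b) = lor3 c a - lor3 c b" by (simp add: lor3_alt algebra_simps)
lemma lor3_minus1[simp]: "lor3 (- a) c = - lor3 a c" by (simp add: lor3_alt algebra_simps)
lemma lor3_minus2[simp]: "lor3 c (- a) = - lor3 c a" by (simp add: lor3_alt algebra_simps)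
lemma lor3_scale1[simp]: "lor3 (r *\<^sub>R a) c = r * lor3 a c" by (simp add: lor3_alt algebra_simps)
lemma lor3_scale2[simp]: "lor3 c (r *\<^sub>R a) = r * lor3 c a" by (simp add: lor3_alt algebra_simps)

lemma lor4_sym: "lor4 a b = lor4 b a" by (simp add: lor4_def lor3_sym algebra_simps)
lemma lor4_add1[simp]: "lor4 (a + b) c = lor4 a c + lor4 b c" by (simp add: lor4_def algebra_simps)
lemma lor4_add2[simp]: "lor4 c (a + b) = lor4 c a + lor4 c b" by (simp add: lor4_def algebra_simps)
lemma lor4_minus1[simp]: "lor4 (- a) c = - lor4 a c" by (simp add: lor4_def algebra_simps)
lemma lor4_minus2[simp]: "lor4 c (- a) = - lor4 c a" by (simp add: lor4_def algebra_simps)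
lemma lor4_scale1[simp]: "lor4 (r *\<^sub>R a) c = r * lor4 a c" by (simp add: lor4_def algebra_simps)
lemma lor4_scale2[simp]: "lor4 c (r *\<^sub>R a) = r * lor4 c a" by (simp add: lor4_def algebra_simps)

definition mvec :: "L3 \<Rightarrow> L3 \<Rightarrow> L3" where
  "mvec N n = (- (fst (snd N) * snd (snd n) - snd (snd N) * fst (snd n)),
               snd (snd N) * fst n - fst N * snd (snd n),
               fst N * fst (snd n) - fst (snd N) * fst n)"

lemma frame:
  assumes "lor3 N N = -1" "lor3 n n = 1" "lor3 N n = 0"
  shows "V = (- lor3 V N) *\<^sub>R N + lor3 V n *\<^sub>R n + lor3 V (mvec N n) *\<^sub>R mvec N n"
proof -
  obtain N0 N1 N2 where N: "N = (N0,N1,N2)" by (cases N) auto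
  obtain n0 n1 n2 where nn: "n = (n0,n1,n2)" by (cases n) auto
  obtain V0 V1 V2 where V: "V = (V0,V1,V2)" by (cases V) auto
  have h: "- N0*N0 + N1*N1 + N2*N2 = -1" "- n0*n0 + n1*n1 + n2*n2 = 1" "- N0*n0 + N1*n1 + N2*n2 = 0"
    using assms by (auto simp: N nn lor3_alt)
  have e0: "V0 = - (- V0*N0 + V1*N1 + V2*N2) * N0 + (- V0*n0 + V1*n1 + V2*n2) * n0
     + (- V0 * (- (N1*n2 - N2*n1)) + V1 * (N2*n0 - N0*n2) + V2 * (N0*n1 - N1*n0)) * (- (N1*n2 - N2*n1))"
    using h by algebra
  have e1: "V1 = - (- V0*N0 + V1*N1 + V2*N2) * N1 + (- V0*n0 + V1*n1 + V2*n2) * n1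
     + (- V0 * (- (N1*n2 - N2*n1)) + V1 * (N2*n0 - N0*n2) + V2 * (N0*n1 - N1*n0)) * (N2*n0 - N0*n2)"
    using h by algebra
  have e2: "V2 = - (- V0*N0 + V1*N1 + V2*N2) * N2 + (- V0*n0 + V1*n1 + V2*n2) * n2
     + (- V0 * (- (N1*n2 - N2*n1)) + V1 * (N2*n0 - N0*n2) + V2 * (N0*n1 - N1*n0)) * (N0*n1 - N1*n0)"
    using h by algebra
  show ?thesis using e0 e1 e2 by (simp add: N nn V lor3_alt mvec_def)
qed

lemma mvec_props:
  assumes "lor3 N N = -1" "lor3 n n = 1" "lor3 N n = 0"
  shows "lor3 (mvec N n) (mvec N n) = 1" "lor3 (mvec N n) N = 0" "lor3 (mvec N n) n = 0"
proof -
  obtain N0 N1 N2 where N: "N = (N0,N1,N2)" by (cases N) auto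
  obtain n0 n1 n2 where nn: "n = (n0,n1,n2)" by (cases n) auto
  have h: "- N0*N0 + N1*N1 + N2*N2 = -1" "- n0*n0 + n1*n1 + n2*n2 = 1" "- N0*n0 + N1*n1 + N2*n2 = 0"
    using assms by (auto simp: N nn lor3_alt)
  show "lor3 (mvec N n) (mvec N n) = 1" using h unfolding N nn lor3_alt mvec_def by simp algebra
  show "lor3 (mvec N n) N = 0" unfolding N nn lor3_alt mvec_def by simp algebra
  show "lor3 (mvec N n) n = 0" unfolding N nn lor3_alt mvec_def by simp algebra
qed

lemma plane2:
  fixes a b x y g e :: real
  assumes "a*b + x*y = 0" "g*a + e*y = 0" "g*b + e*x = 0" "g*g + e*e = 1" "b*b + x*x > 0"
  shows "a = 0 \<and> y = 0"
proof -
  define k where "k = y*g - a*e"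
  define j where "j = x*g - b*e"
  have a: "a = - e * k" unfolding k_def using assms(2,4) by algebra
  have y: "y = g * k" unfolding k_def using assms(2,4) by algebra
  have b: "b = - e * j" unfolding j_def using assms(3,4) by algebra
  have x: "x = g * j" unfolding j_def using assms(3,4) by algebra
  have "k * j = 0" using assms(1,4) a y b x by algebra
  moreover have "j \<noteq> 0" using assms(5) b x by auto
  ultimately have "k = 0" by simp
  then show ?thesis using a y by simp
qed

lemma F6alg:
  fixes N n X3 Y3 E3 :: L3 and x y ee :: real
  assumes hN: "lor3 N N = -1" and hn: "lor3 n n = 1" and hNn: "lor3 N n = 0"
    and "lor3 X3 N = 0" "lor3 Y3 N = 0" "lor3 E3 N = 0" "lor3 X3 n = 0" "lor3 E3 n = 0"
    and "lor3 X3 Y3 + x*y = 0" "lor3 E3 Y3 + ee*y = 0" "lor3 E3 X3 + ee*x = 0"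
    and "lor3 E3 E3 + ee*ee = 1" "lor3 X3 X3 + x*x > 0"
  shows "Y3 = lor3 Y3 n *\<^sub>R n \<and> y = 0"
proof -
  let ?m = "mvec N n"
  note mp = mvec_props[OF hN hn hNn]
  have X: "X3 = lor3 X3 ?m *\<^sub>R ?m" using frame[OF hN hn hNn, of X3] assms by simp
  have E: "E3 = lor3 E3 ?m *\<^sub>R ?m" using frame[OF hN hn hNn, of E3] assms by simp
  have Y: "Y3 = lor3 Y3 n *\<^sub>R n + lor3 Y3 ?m *\<^sub>R ?m" using frame[OF hN hn hNn, of Y3] assms by simp
  have nm: "lor3 n ?m = 0" using mp lor3_sym by metis
  define a where "a = lor3 Y3 ?m"
  define b where "b = lor3 X3 ?m"
  define g where "g = lor3 E3 ?m"
  have sa: "lor3 ?m Y3 = a" "lor3 ?m X3 = b" "lor3 ?m E3 = g"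
    by (simp_all add: a_def b_def g_def lor3_sym)
  have "lor3 X3 Y3 = b * a"
    apply (subst X, subst Y) using mp nm sa by (simp add: a_def b_def algebra_simps)
  moreover have "lor3 E3 Y3 = g * a"
    apply (subst E, subst Y) using mp nm sa by (simp add: a_def g_def algebra_simps)
  moreover have "lor3 E3 X3 = g * b"
    apply (subst E, subst X) using mp sa by (simp add: b_def g_def algebra_simps)
  moreover have "lor3 E3 E3 = g * g"
    apply (subst E, subst E) using mp sa by (simp add: g_def algebra_simps)
  moreover have "lor3 X3 X3 = b * b"
    apply (subst X, subst X) using mp sa by (simp add: b_def algebra_simps)
  ultimately have "a = 0 \<and> y = 0" using plane2[of a b x y g ee] assms by (simp add: algebra_simps)
  then show ?thesis using Y a_def by simp
qed


lemma vrefl_fst: "fst (vrefl n p) = fst p - (2 * lor3 (fst p) n) *\<^sub>R n" by (simp add: vrefl_def)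
lemma vrefl_snd[simp]: "snd (vrefl n p) = snd p" by (simp add: vrefl_def)

lemma vrefl_lor3:
  assumes "lor3 n n = 1"
  shows "lor3 (fst (vrefl n p)) (fst (vrefl n q)) = lor3 (fst p) (fst q)"
proof -
  have s: "lor3 n (fst q) = lor3 (fst q) n" "lor3 n (fst p) = lor3 (fst p) n" by (rule lor3_sym)+
  show ?thesis using assms by (simp add: vrefl_fst s algebra_simps)
qed

lemma vrefl_lor4:
  assumes "lor3 n n = 1"
  shows "lor4 (vrefl n p) (vrefl n q) = lor4 p q"
  using vrefl_lor3[OF assms] by (simp add: lor4_def)

lemma vrefl_add: "vrefl n (p + q) = vrefl n p + vrefl n q"
  by (simp add: vrefl_def algebra_simps)
lemma vrefl_scale: "vrefl n (r *\<^sub>R p) = r *\<^sub>R vrefl n p"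
  by (simp add: vrefl_def algebra_simps)
lemma vrefl_minus: "vrefl n (- p) = - vrefl n p"
  by (simp add: vrefl_def algebra_simps)

lemma bl_Lf: "bounded_linear (\<lambda>p::L4. lor3 (fst p) n)"
  unfolding linear_conv_bounded_linear[symmetric]
  by (rule linearI) (simp_all add: lor3_alt algebra_simps)

lemma bl_vrefl: "bounded_linear (vrefl n)"
  unfolding linear_conv_bounded_linear[symmetric]
  by (rule linearI) (simp_all add: vrefl_add vrefl_scale)

lemma vrefl_fix: "lor3 (fst p) n = 0 \<Longrightarrow> vrefl n p = p"
  by (simp add: vrefl_def)

lemma vrefl_anti:
  assumes "lor3 n n = 1" "fst p = lor3 (fst p) n *\<^sub>R n" "snd p = 0"
  shows "- vrefl n p = p"
proof -
  obtain P h where p: "p = (P, h)" by (cases p)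
  define L where "L = lor3 P n"
  have P: "P = L *\<^sub>R n" "h = 0" using assms p L_def by auto
  have "(2*L) *\<^sub>R n = P + P" using P(1) by (simp add: scaleR_2[symmetric])
  then have "- (P - (2*L) *\<^sub>R n) = P" by simp
  then show ?thesis using p P(2) by (simp add: vrefl_def L_def)
qed

lemma timelike_same:
  fixes a0 a1 a2 b0 b1 b2 :: real
  assumes "- a0*a0 + a1*a1 + a2*a2 = -1" "- b0*b0 + b1*b1 + b2*b2 = -1" "b0 > 0" "a0 \<le> 0"
  shows "- a0*b0 + a1*b1 + a2*b2 > 0"
proof -
  define sv where "sv = a1*b1 + a2*b2"
  have cs0: "(a1*a1+a2*a2)*(b1*b1+b2*b2) - sv * sv = (a1*b2 - a2*b1)*(a1*b2 - a2*b1)"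
    unfolding sv_def by algebra
  have cs: "sv * sv \<le> (a1*a1+a2*a2)*(b1*b1+b2*b2)"
    using cs0 zero_le_square[of "a1*b2 - a2*b1"] by linarith
  have A: "a1*a1+a2*a2 = a0*a0 - 1" "b1*b1+b2*b2 = b0*b0 - 1" using assms by linarith+
  have "a1*a1 + a2*a2 \<ge> 0" "b1*b1 + b2*b2 \<ge> 0" by simp_all
  then have A1: "a0*a0 \<ge> 1" "b0*b0 \<ge> 1" using A by linarith+
  have ex: "(a0*a0-1)*(b0*b0-1) = (a0*b0)*(a0*b0) - a0*a0 - b0*b0 + 1" by algebra
  have pq: "(a1*a1+a2*a2)*(b1*b1+b2*b2) < (a0*b0)*(a0*b0)"
    unfolding A ex using A1 by linarith
  have nn: "- a0*b0 \<ge> 0" using assms by (simp add: mult_nonpos_nonneg)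
  have "sv > a0*b0"
  proof (rule ccontr)
    assume "\<not> sv > a0*b0"
    then have "- sv \<ge> - a0*b0" by linarith
    then have "(- sv) * (- sv) \<ge> (- a0*b0)*(- a0*b0)" using nn by (intro mult_mono) auto
    then show False using cs pq by simp
  qed
  then show ?thesis unfolding sv_def by linarith
qed

lemma vrefl_H2R:
  assumes "lor3 n n = 1" "p \<in> H2R"
  shows "vrefl n p \<in> H2R"
proof -
  let ?N = "fst p" and ?M = "fst (vrefl n p)"
  obtain N0 h0 where p: "p = (N0, h0)" "lor3 N0 N0 = -1" "fst N0 > 0" using assms(2) by (auto simp: H2R_def)
  have NN: "lor3 ?N ?N = -1" "fst ?N > 0" using p by auto
  have MM: "lor3 ?M ?M = -1" using vrefl_lor3[OF assms(1)] NN by simp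
  have MN: "lor3 ?M ?N = -1 - 2 * (lor3 ?N n)^2"
  proof -
    have s: "lor3 n (fst p) = lor3 (fst p) n" by (rule lor3_sym)
    show ?thesis using assms(1) NN by (simp add: vrefl_fst s power2_eq_square algebra_simps)
  qed
  have "fst ?M > 0"
  proof (rule ccontr)
    assume "\<not> fst ?M > 0"
    then have "lor3 ?M ?N > 0" using timelike_same[of "fst ?M" "fst (snd ?M)" "snd (snd ?M)"
        "fst ?N" "fst (snd ?N)" "snd (snd ?N)"] MM NN by (simp add: lor3_alt)
    then show False using MN by (smt (verit) zero_le_power2)
  qed
  then show ?thesis using MM by (cases "vrefl n p") (auto simp: H2R_def)
qed


lemma path_vd:
  fixes F :: "complex \<Rightarrow> 'b::real_normed_vector"
  assumes "(F has_derivative F') (at (\<gamma> s) within S)"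
    and "(\<gamma> has_vector_derivative d) (at s within T)" and "\<gamma> ` T \<subseteq> S"
  shows "((\<lambda>s. F (\<gamma> s)) has_vector_derivative F' d) (at s within T)"
proof -
  have "(F has_derivative F') (at (\<gamma> s) within \<gamma> ` T)"
    using has_derivative_subset assms(1,3) by blast
  from vector_derivative_diff_chain_within[OF assms(2) this] show ?thesis by (simp add: o_def)
qed

lemma line_vd: "((\<lambda>t. q + of_real t * d) has_vector_derivative d) (at t within T)"
proof -
  have "(\<lambda>t. q + of_real t * d) = (\<lambda>t. q + t *\<^sub>R d)" by (simp add: scaleR_conv_of_real)
  moreover have "((\<lambda>t::real. q + t *\<^sub>R d) has_derivative (\<lambda>t. t *\<^sub>R d)) (at t within T)"
    by (intro derivative_eq_intros bounded_linear_imp_has_derivative bounded_linear_scaleR_left) auto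
  ultimately show ?thesis by (simp add: has_vector_derivative_def)
qed

lemma dir_zero:
  fixes F :: "complex \<Rightarrow> 'b::real_normed_vector"
  assumes "(F has_derivative F') (at q within S)" "e > 0"
    and "\<forall>t\<in>{0..e}. q + of_real t * d \<in> S \<and> F (q + of_real t * d) = 0"
  shows "F' d = 0"
proof -
  let ?g = "\<lambda>t. q + of_real t * d"
  have 1: "((\<lambda>t. F (?g t)) has_vector_derivative F' d) (at 0 within {0..e})"
    by (rule path_vd[where S=S]) (use assms in \<open>auto intro: line_vd\<close>)
  have 2: "((\<lambda>t. F (?g t)) has_vector_derivative 0) (at 0 within {0..e})"
    by (rule has_vector_derivative_transform_within[OF has_vector_derivative_const[of 0] zero_less_one])
       (use assms in auto)
  have "at (0::real) within {0..e} \<noteq> bot"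
    using at_within_Icc_at_right[OF assms(2)] by simp
  then show ?thesis using vector_derivative_unique_within 1 2 by blast
qed

lemma sym2:
  fixes G Gx Gy Gxy Gyx :: "real \<Rightarrow> real \<Rightarrow> real" and e :: real
  assumes e: "e > 0"
   and dx: "\<And>s t. s\<in>{0..e} \<Longrightarrow> t\<in>{0..e} \<Longrightarrow> ((\<lambda>s. G s t) has_real_derivative Gx s t) (at s within {0..e})"
   and dy: "\<And>s t. s\<in>{0..e} \<Longrightarrow> t\<in>{0..e} \<Longrightarrow> ((\<lambda>t. G s t) has_real_derivative Gy s t) (at t within {0..e})"
   and dxy: "\<And>s t. s\<in>{0..e} \<Longrightarrow> t\<in>{0..e} \<Longrightarrow> ((\<lambda>t. Gx s t) has_real_derivative Gxy s t) (at t within {0..e})"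
   and dyx: "\<And>s t. s\<in>{0..e} \<Longrightarrow> t\<in>{0..e} \<Longrightarrow> ((\<lambda>s. Gy s t) has_real_derivative Gyx s t) (at s within {0..e})"
   and cxy: "\<And>\<epsilon>. \<epsilon>>0 \<Longrightarrow> \<exists>\<delta>>0. \<forall>s t. s\<in>{0..e} \<longrightarrow> t\<in>{0..e} \<longrightarrow> s < \<delta> \<longrightarrow> t < \<delta> \<longrightarrow> \<bar>Gxy s t - Gxy 0 0\<bar> < \<epsilon>"
   and cyx: "\<And>\<epsilon>. \<epsilon>>0 \<Longrightarrow> \<exists>\<delta>>0. \<forall>s t. s\<in>{0..e} \<longrightarrow> t\<in>{0..e} \<longrightarrow> s < \<delta> \<longrightarrow> t < \<delta> \<longrightarrow> \<bar>Gyx s t - Gyx 0 0\<bar> < \<epsilon>"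
  shows "Gxy 0 0 = Gyx 0 0"
proof -
  have key: "\<bar>Gxy 0 0 - Gyx 0 0\<bar> < 2 * \<epsilon>" if eps: "\<epsilon> > 0" for \<epsilon>
  proof -
    obtain d1 where d1: "d1 > 0" "\<forall>s t. s\<in>{0..e} \<longrightarrow> t\<in>{0..e} \<longrightarrow> s < d1 \<longrightarrow> t < d1 \<longrightarrow> \<bar>Gxy s t - Gxy 0 0\<bar> < \<epsilon>"
      using cxy[OF eps] by blast
    obtain d2 where d2: "d2 > 0" "\<forall>s t. s\<in>{0..e} \<longrightarrow> t\<in>{0..e} \<longrightarrow> s < d2 \<longrightarrow> t < d2 \<longrightarrow> \<bar>Gyx s t - Gyx 0 0\<bar> < \<epsilon>"
      using cyx[OF eps] by blast
    define h where "h = min e (min d1 d2) / 2"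
    have h: "0 < h" "h < d1" "h < d2" "h < e" using e d1 d2 by (auto simp: h_def)
    have sub: "{0..h} \<subseteq> {0..e}" using h by auto
    have D: "(f has_derivative (\<lambda>u. u * f')) (at x within {0..h})"
      if fd: "(f has_real_derivative f') (at x within {0..e})" for f f' x
    proof -
      have "(f has_field_derivative f') (at x within {0..h})" using has_field_derivative_subset[OF fd sub] .
      then have "(f has_derivative (*) f') (at x within {0..h})" by (simp add: has_field_derivative_def)
      moreover have "(*) f' = (\<lambda>u. u*f')" by (auto simp: fun_eq_iff)
      ultimately show ?thesis by simp
    qed
    obtain \<xi> where \<xi>: "\<xi>\<in>{0<..<h}" "(G h h - G h 0) - (G 0 h - G 0 0) = (h - 0) * (Gx \<xi> h - Gx \<xi> 0)"
    proof -
      have "\<exists>x\<in>{0<..<h}. (\<lambda>s. G s h - G s 0) h - (\<lambda>s. G s h - G s 0) 0 = (\<lambda>u. u * (Gx x h - Gx x 0)) (h - 0)"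
        by (rule mvt_simple[OF h(1)]) (intro D DERIV_diff dx; use h in auto)
      then show ?thesis using that by auto
    qed
    obtain \<eta> where \<eta>: "\<eta>\<in>{0<..<h}" "Gx \<xi> h - Gx \<xi> 0 = (h - 0) * Gxy \<xi> \<eta>"
    proof -
      have "\<exists>x\<in>{0<..<h}. (\<lambda>t. Gx \<xi> t) h - (\<lambda>t. Gx \<xi> t) 0 = (\<lambda>u. u * Gxy \<xi> x) (h - 0)"
        by (rule mvt_simple[OF h(1)]) (intro D dxy; use h \<xi> in auto)
      then show ?thesis using that by auto
    qed
    obtain \<eta>' where \<eta>': "\<eta>'\<in>{0<..<h}" "(G h h - G 0 h) - (G h 0 - G 0 0) = (h - 0) * (Gy h \<eta>' - Gy 0 \<eta>')"
    proof -
      have "\<exists>x\<in>{0<..<h}. (\<lambda>t. G h t - G 0 t) h - (\<lambda>t. G h t - G 0 t) 0 = (\<lambda>u. u * (Gy h x - Gy 0 x)) (h - 0)"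
        by (rule mvt_simple[OF h(1)]) (intro D DERIV_diff dy; use h in auto)
      then show ?thesis using that by auto
    qed
    obtain \<xi>' where \<xi>': "\<xi>'\<in>{0<..<h}" "Gy h \<eta>' - Gy 0 \<eta>' = (h - 0) * Gyx \<xi>' \<eta>'"
    proof -
      have "\<exists>x\<in>{0<..<h}. (\<lambda>s. Gy s \<eta>') h - (\<lambda>s. Gy s \<eta>') 0 = (\<lambda>u. u * Gyx x \<eta>') (h - 0)"
        by (rule mvt_simple[OF h(1)]) (intro D dyx; use h \<eta>' in auto)
      then show ?thesis using that by auto
    qed
    have "h * (h * Gxy \<xi> \<eta>) = h * (h * Gyx \<xi>' \<eta>')"
      using \<xi>(2) \<eta>(2) \<eta>'(2) \<xi>'(2) by (simp add: algebra_simps)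
    then have eq: "Gxy \<xi> \<eta> = Gyx \<xi>' \<eta>'" using h(1) by simp
    have "\<bar>Gxy \<xi> \<eta> - Gxy 0 0\<bar> < \<epsilon>" using d1(2) \<xi>(1) \<eta>(1) h by auto
    moreover have "\<bar>Gyx \<xi>' \<eta>' - Gyx 0 0\<bar> < \<epsilon>" using d2(2) \<xi>'(1) \<eta>'(1) h by auto
    ultimately show ?thesis using eq by linarith
  qed
  show ?thesis
  proof (rule ccontr)
    assume "Gxy 0 0 \<noteq> Gyx 0 0"
    then have "\<bar>Gxy 0 0 - Gyx 0 0\<bar> / 2 > 0" by simp
    from key[OF this] show False by simp
  qed
qed


lemma line_x: "((\<lambda>s. z + of_real s + c) has_vector_derivative 1) (at s within T)"
proof -
  have "(\<lambda>s. z + of_real s + c) = (\<lambda>s. (z + c) + of_real s * 1)" by (simp add: fun_eq_iff algebra_simps)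
  then show ?thesis using line_vd[of "z + c" 1] by simp
qed

lemma line_y: "((\<lambda>t. c + of_real t * \<i>) has_vector_derivative \<i>) (at t within T)"
  using line_vd[of c \<i>] by simp

context
  fixes \<Omega> :: "complex set" and \<psi> \<psi>x \<psi>y \<psi>xx \<psi>xy \<psi>yx \<psi>yy :: "complex \<Rightarrow> L4"
  assumes opn: "open \<Omega>" and C2: "C2_partials (\<Omega> \<inter> {z. 0 \<le> Im z}) \<psi> \<psi>x \<psi>y \<psi>xx \<psi>xy \<psi>yx \<psi>yy"
begin

lemma D0: "w \<in> \<Omega> \<inter> {z. 0 \<le> Im z} \<Longrightarrow> (\<psi> has_derivative (\<lambda>v. Re v *\<^sub>R \<psi>x w + Im v *\<^sub>R \<psi>y w)) (at w within \<Omega> \<inter> {z. 0 \<le> Im z})"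
  using C2 by (simp add: C2_partials_def)
lemma D1: "w \<in> \<Omega> \<inter> {z. 0 \<le> Im z} \<Longrightarrow> (\<psi>x has_derivative (\<lambda>v. Re v *\<^sub>R \<psi>xx w + Im v *\<^sub>R \<psi>xy w)) (at w within \<Omega> \<inter> {z. 0 \<le> Im z})"
  using C2 by (simp add: C2_partials_def)
lemma D2: "w \<in> \<Omega> \<inter> {z. 0 \<le> Im z} \<Longrightarrow> (\<psi>y has_derivative (\<lambda>v. Re v *\<^sub>R \<psi>yx w + Im v *\<^sub>R \<psi>yy w)) (at w within \<Omega> \<inter> {z. 0 \<le> Im z})"
  using C2 by (simp add: C2_partials_def)

lemma ballsq:
  assumes "z \<in> \<Omega>"
  shows "\<exists>e>0. \<forall>s t. \<bar>s\<bar> \<le> e \<longrightarrow> \<bar>t\<bar> \<le> e \<longrightarrow> z + of_real s + of_real t * \<i> \<in> \<Omega>"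
proof -
  obtain r where r: "r > 0" "ball z r \<subseteq> \<Omega>" using opn assms open_contains_ball by blast
  have "z + of_real s + of_real t * \<i> \<in> \<Omega>" if "\<bar>s\<bar> \<le> r/3" "\<bar>t\<bar> \<le> r/3" for s t
  proof -
    have "norm (of_real s + of_real t * \<i> :: complex) \<le> \<bar>s\<bar> + \<bar>t\<bar>"
      by (metis norm_triangle_ineq norm_of_real norm_mult norm_ii mult_1_right)
    moreover have "dist z (z + of_real s + of_real t * \<i>) = norm (of_real s + of_real t * \<i> :: complex)"
    proof -
      have "dist z (z + a) = norm a" for a :: complex by (simp add: dist_norm)
      then show ?thesis by (metis add.assoc)
    qed
    ultimately have "dist z (z + of_real s + of_real t * \<i>) < r" using that r(1) by linarith
    then show ?thesis using r(2) by auto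
  qed
  then show ?thesis using r(1) by (intro exI[of _ "r/3"]) auto
qed

lemma zero_real_dir:
  assumes "z \<in> \<Omega>" "Im z = 0" "(F has_derivative F') (at z within \<Omega> \<inter> {z. 0 \<le> Im z})"
    and "\<forall>w\<in>\<Omega>. Im w = 0 \<longrightarrow> F w = 0"
  shows "F' 1 = 0"
proof -
  obtain e where e: "e > 0" "\<forall>s t. \<bar>s\<bar> \<le> e \<longrightarrow> \<bar>t\<bar> \<le> e \<longrightarrow> z + of_real s + of_real t * \<i> \<in> \<Omega>"
    using ballsq[OF assms(1)] by blast
  have "z + of_real s * 1 \<in> \<Omega>" if "s \<in> {0..e}" for s using e(2)[rule_format, of s 0] that by auto
  then show ?thesis
    by (intro dir_zero[OF assms(3) e(1)]) (use assms(2,4) in auto)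
qed

lemma zero_up_dir:
  assumes "z \<in> \<Omega>" "Im z = 0" "(F has_derivative F') (at z within \<Omega> \<inter> {z. 0 \<le> Im z})"
    and "\<forall>w\<in>\<Omega> \<inter> {z. 0 \<le> Im z}. F w = 0"
  shows "F' \<i> = 0"
proof -
  obtain e where e: "e > 0" "\<forall>s t. \<bar>s\<bar> \<le> e \<longrightarrow> \<bar>t\<bar> \<le> e \<longrightarrow> z + of_real s + of_real t * \<i> \<in> \<Omega>"
    using ballsq[OF assms(1)] by blast
  have "z + of_real t * \<i> \<in> \<Omega>" if "t \<in> {0..e}" for t using e(2)[rule_format, of 0 t] that by auto
  then show ?thesis
    by (intro dir_zero[OF assms(3) e(1)]) (use assms(2,4) in auto)
qed

lemma schwarz_at:
  assumes z: "z \<in> \<Omega>" "Im z = 0"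
  shows "\<psi>xy z = \<psi>yx z"
proof -
  define U where "U = \<Omega> \<inter> {z. 0 \<le> Im z}"
  define c where "c = \<psi>xy z - \<psi>yx z"
  obtain e where e: "e > 0" "\<forall>s t. \<bar>s\<bar> \<le> e \<longrightarrow> \<bar>t\<bar> \<le> e \<longrightarrow> z + of_real s + of_real t * \<i> \<in> \<Omega>"
    using ballsq[OF assms(1)] by blast
  define P where "P s t = z + of_real s + of_real t * \<i>" for s t
  have PU: "P s t \<in> U" if "s \<in> {0..e}" "t \<in> {0..e}" for s t
    using e(2) that z(2) by (auto simp: P_def U_def)
  have PU': "(\<lambda>s. P s t) ` {0..e} \<subseteq> U" "(\<lambda>t. P s t) ` {0..e} \<subseteq> U" if "s \<in> {0..e}" "t \<in> {0..e}" for s t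
    using PU that by auto
  have bl: "bounded_linear (\<lambda>v::L4. inner v c)" by (rule bounded_linear_inner_left)
  have vx: "((\<lambda>s. inner (f (P s t)) c) has_real_derivative inner (fx (P s t)) c) (at s within {0..e})"
    if "s \<in> {0..e}" "t \<in> {0..e}"
       and fd: "\<And>w. w \<in> U \<Longrightarrow> (f has_derivative (\<lambda>v. Re v *\<^sub>R fx w + Im v *\<^sub>R fy w)) (at w within U)"
    for s t and f fx fy :: "complex \<Rightarrow> L4"
  proof -
    have "((\<lambda>w. inner (f w) c) has_derivative (\<lambda>v. inner (Re v *\<^sub>R fx (P s t) + Im v *\<^sub>R fy (P s t)) c)) (at (P s t) within U)"
      by (rule bounded_linear.has_derivative[OF bl fd[OF PU[OF that(1,2)]]])
    from path_vd[OF this[unfolded P_def] line_x PU'(1)[OF that(1,2), unfolded P_def]]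
    show ?thesis by (simp add: has_real_derivative_iff_has_vector_derivative P_def)
  qed
  have vy: "((\<lambda>t. inner (f (P s t)) c) has_real_derivative inner (fy (P s t)) c) (at t within {0..e})"
    if "s \<in> {0..e}" "t \<in> {0..e}"
       and fd: "\<And>w. w \<in> U \<Longrightarrow> (f has_derivative (\<lambda>v. Re v *\<^sub>R fx w + Im v *\<^sub>R fy w)) (at w within U)"
    for s t and f fx fy :: "complex \<Rightarrow> L4"
  proof -
    have "((\<lambda>w. inner (f w) c) has_derivative (\<lambda>v. inner (Re v *\<^sub>R fx (P s t) + Im v *\<^sub>R fy (P s t)) c)) (at (P s t) within U)"
      by (rule bounded_linear.has_derivative[OF bl fd[OF PU[OF that(1,2)]]])
    from path_vd[OF this[unfolded P_def] line_y PU'(2)[OF that(1,2), unfolded P_def]]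
    show ?thesis by (simp add: has_real_derivative_iff_has_vector_derivative P_def)
  qed
  have cont: "\<exists>\<delta>>0. \<forall>s t. s\<in>{0..e} \<longrightarrow> t\<in>{0..e} \<longrightarrow> s < \<delta> \<longrightarrow> t < \<delta> \<longrightarrow>
       \<bar>inner (f (P s t)) c - inner (f (P 0 0)) c\<bar> < \<epsilon>"
    if "\<epsilon> > 0" and fc: "continuous_on U f" for \<epsilon> and f :: "complex \<Rightarrow> L4"
  proof -
    have zU: "z \<in> U" using z by (simp add: U_def)
    define \<epsilon>' where "\<epsilon>' = \<epsilon> / (norm c + 1)"
    have nc: "norm c + 1 > 0" by (smt (verit) norm_ge_zero)
    have \<epsilon>': "\<epsilon>' > 0" using that nc by (simp add: \<epsilon>'_def)
    obtain d where d: "d > 0" "\<forall>x'\<in>U. dist x' z < d \<longrightarrow> dist (f x') (f z) < \<epsilon>'"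
      using fc zU \<epsilon>' unfolding continuous_on_iff by blast
    show ?thesis
    proof (intro exI[of _ "d/2"] conjI allI impI)
      show "d/2 > 0" using d by simp
      fix s t assume st: "s \<in> {0..e}" "t \<in> {0..e}" "s < d/2" "t < d/2"
      have "norm (of_real s + of_real t * \<i> :: complex) \<le> \<bar>s\<bar> + \<bar>t\<bar>"
        by (metis norm_triangle_ineq norm_of_real norm_mult norm_ii mult_1_right)
      then have "dist (P s t) z < d" using st by (simp add: P_def dist_norm)
      then have "dist (f (P s t)) (f z) < \<epsilon>'" using d(2) PU[OF st(1,2)] by blast
      then have n1: "norm (f (P s t) - f z) < \<epsilon>'" by (simp add: dist_norm)
      have "\<bar>inner (f (P s t)) c - inner (f (P 0 0)) c\<bar> = \<bar>inner (f (P s t) - f z) c\<bar>"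
        by (simp add: P_def inner_diff_left)
      also have "\<dots> \<le> norm (f (P s t) - f z) * norm c" by (rule Cauchy_Schwarz_ineq2)
      also have "\<dots> \<le> norm (f (P s t) - f z) * (norm c + 1)" by (intro mult_left_mono) auto
      also have "\<dots> < \<epsilon>' * (norm c + 1)" using n1 nc by (intro mult_strict_right_mono) auto
      also have "\<dots> = \<epsilon>" using nc by (simp add: \<epsilon>'_def)
      finally show "\<bar>inner (f (P s t)) c - inner (f (P 0 0)) c\<bar> < \<epsilon>" .
    qed
  qed
  have D0': "\<And>w. w \<in> U \<Longrightarrow> (\<psi> has_derivative (\<lambda>v. Re v *\<^sub>R \<psi>x w + Im v *\<^sub>R \<psi>y w)) (at w within U)"
    using D0 U_def by blast
  have D1': "\<And>w. w \<in> U \<Longrightarrow> (\<psi>x has_derivative (\<lambda>v. Re v *\<^sub>R \<psi>xx w + Im v *\<^sub>R \<psi>xy w)) (at w within U)"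
    using D1 U_def by blast
  have D2': "\<And>w. w \<in> U \<Longrightarrow> (\<psi>y has_derivative (\<lambda>v. Re v *\<^sub>R \<psi>yx w + Im v *\<^sub>R \<psi>yy w)) (at w within U)"
    using D2 U_def by blast
  have cxy: "continuous_on U \<psi>xy" and cyx: "continuous_on U \<psi>yx" using C2 by (auto simp: C2_partials_def U_def)
  have "inner (\<psi>xy (P 0 0)) c = inner (\<psi>yx (P 0 0)) c"
    apply (rule sym2[where G="\<lambda>s t. inner (\<psi> (P s t)) c" and Gx="\<lambda>s t. inner (\<psi>x (P s t)) c"
          and Gy="\<lambda>s t. inner (\<psi>y (P s t)) c" and Gxy="\<lambda>s t. inner (\<psi>xy (P s t)) c"
          and Gyx="\<lambda>s t. inner (\<psi>yx (P s t)) c", OF e(1)])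
         apply (rule vx, assumption, assumption, erule D0')
        apply (rule vy, assumption, assumption, erule D0')
       apply (rule vy, assumption, assumption, erule D1')
      apply (rule vx, assumption, assumption, erule D2')
     apply (rule cont[OF _ cxy], assumption)
    apply (rule cont[OF _ cyx], assumption)
    done
  then have "inner c c = 0" by (simp add: c_def P_def inner_diff_left)
  then show ?thesis by (simp add: c_def)
qed

end


definition J3 :: "L3 \<Rightarrow> L3" where "J3 b = (- fst b, snd b)"

lemma lor3_inner: "lor3 a b = inner a (J3 b)"
  by (simp add: lor3_alt J3_def inner_prod_def)

lemma lor4_inner: "lor4 p q = inner p (J3 (fst q), snd q)"
  by (simp add: lor4_def lor3_inner inner_prod_def)

lemma bb_lor3: "bounded_bilinear lor3"
proof -
  have "bounded_linear J3" unfolding linear_conv_bounded_linear[symmetric]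
    by (rule linearI) (auto simp: J3_def)
  then have "bounded_bilinear (\<lambda>x y. inner (id x) (J3 y))"
    by (intro bounded_bilinear.comp[OF bounded_bilinear_inner] bounded_linear_ident[unfolded id_def[symmetric]])
  then show ?thesis by (simp add: lor3_inner[abs_def])
qed

lemma bb_lor4: "bounded_bilinear lor4"
proof -
  have "bounded_linear (\<lambda>q::L4. (J3 (fst q), snd q))" unfolding linear_conv_bounded_linear[symmetric]
    by (rule linearI) (auto simp: J3_def)
  then have "bounded_bilinear (\<lambda>x y. inner (id x) ((\<lambda>q::L4. (J3 (fst q), snd q)) y))"
    by (intro bounded_bilinear.comp[OF bounded_bilinear_inner] bounded_linear_ident[unfolded id_def[symmetric]])
  then show ?thesis by (simp add: lor4_inner[abs_def])
qed

lemma bl_Pm: "bounded_linear (\<lambda>p::L4. (fst p - lor3 (fst p) n *\<^sub>R n, snd p))"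
  unfolding linear_conv_bounded_linear[symmetric]
  by (rule linearI) (auto simp: algebra_simps)


context
  fixes \<Omega> :: "complex set" and n :: L3 and \<psi> \<psi>x \<psi>y \<psi>xx \<psi>xy \<psi>yx \<psi>yy :: "complex \<Rightarrow> L4"
  assumes opn: "open \<Omega>" and n: "lor3 n n = 1"
    and C2: "C2_partials (\<Omega> \<inter> {z. Im z \<ge> 0}) \<psi> \<psi>x \<psi>y \<psi>xx \<psi>xy \<psi>yx \<psi>yy"
    and conf: "conformal_immersion (\<Omega> \<inter> {z. Im z \<ge> 0}) \<psi> \<psi>x \<psi>y"
    and cmc: "cmc_half (\<Omega> \<inter> {z. Im z \<ge> 0}) \<psi> \<psi>x \<psi>y \<psi>xx \<psi>yy"
    and bdry: "\<psi> ` (\<Omega> \<inter> {z. Im z = 0}) \<subseteq> vplane n"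
    and tang: "\<forall>z \<in> \<Omega> \<inter> {z. Im z = 0}. \<forall>\<eta>.
                 unit_normal (\<psi> z) (\<psi>x z) (\<psi>y z) \<eta> \<and> snd \<eta> > 0 \<longrightarrow> lor3 (fst \<eta>) n = 0"
begin

lemma F1: "w \<in> \<Omega> \<Longrightarrow> Im w = 0 \<Longrightarrow> lor3 (fst (\<psi> w)) n = 0"
  using bdry by (auto simp: vplane_def)

lemma F2: "w \<in> \<Omega> \<Longrightarrow> Im w = 0 \<Longrightarrow> lor3 (fst (\<psi>x w)) n = 0"
proof -
  assume w: "w \<in> \<Omega>" "Im w = 0"
  have "((\<lambda>w. lor3 (fst (\<psi> w)) n) has_derivative (\<lambda>v. lor3 (fst (Re v *\<^sub>R \<psi>x w + Im v *\<^sub>R \<psi>y w)) n)) (at w within \<Omega> \<inter> {z. 0 \<le> Im z})"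
    by (rule bounded_linear.has_derivative[OF bl_Lf D0[OF opn C2]]) (use w in auto)
  from zero_real_dir[OF opn C2 w this] show ?thesis using F1 by simp
qed

lemma F3: "w \<in> \<Omega> \<Longrightarrow> Im w = 0 \<Longrightarrow> lor3 (fst (\<psi>xx w)) n = 0"
proof -
  assume w: "w \<in> \<Omega>" "Im w = 0"
  have "((\<lambda>w. lor3 (fst (\<psi>x w)) n) has_derivative (\<lambda>v. lor3 (fst (Re v *\<^sub>R \<psi>xx w + Im v *\<^sub>R \<psi>xy w)) n)) (at w within \<Omega> \<inter> {z. 0 \<le> Im z})"
    by (rule bounded_linear.has_derivative[OF bl_Lf D1[OF opn C2]]) (use w in auto)
  from zero_real_dir[OF opn C2 w this] show ?thesis using F2 by simp
qed

lemma H2R_lor: "p \<in> H2R \<Longrightarrow> lor3 (fst p) (fst p) = -1"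
  by (auto simp: H2R_def)

lemma F4: "w \<in> \<Omega> \<Longrightarrow> Im w = 0 \<Longrightarrow> lor3 (fst (\<psi>x w)) (fst (\<psi> w)) = 0 \<and> lor3 (fst (\<psi>y w)) (fst (\<psi> w)) = 0"
proof -
  assume w: "w \<in> \<Omega>" "Im w = 0"
  let ?D = "\<lambda>v. Re v *\<^sub>R \<psi>x w + Im v *\<^sub>R \<psi>y w"
  have d: "((\<lambda>w. fst (\<psi> w)) has_derivative (\<lambda>v. fst (?D v))) (at w within \<Omega> \<inter> {z. 0 \<le> Im z})"
    by (rule has_derivative_fst[OF D0[OF opn C2]]) (use w in auto)
  have der: "((\<lambda>w. lor3 (fst (\<psi> w)) (fst (\<psi> w)) + 1) has_derivative
      (\<lambda>v. lor3 (fst (\<psi> w)) (fst (?D v)) + lor3 (fst (?D v)) (fst (\<psi> w)) + 0)) (at w within \<Omega> \<inter> {z. 0 \<le> Im z})"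
    by (intro has_derivative_add bounded_bilinear.FDERIV[OF bb_lor3 d d] has_derivative_const)
  have zer: "\<forall>u\<in>\<Omega> \<inter> {z. 0 \<le> Im z}. lor3 (fst (\<psi> u)) (fst (\<psi> u)) + 1 = 0"
  proof
    fix u assume "u \<in> \<Omega> \<inter> {z. 0 \<le> Im z}"
    then have "\<psi> u \<in> H2R" using conf by (auto simp: conformal_immersion_def)
    then show "lor3 (fst (\<psi> u)) (fst (\<psi> u)) + 1 = 0" using H2R_lor by simp
  qed
  have zer': "\<forall>u\<in>\<Omega>. Im u = 0 \<longrightarrow> lor3 (fst (\<psi> u)) (fst (\<psi> u)) + 1 = 0" using zer by auto
  from zero_real_dir[OF opn C2 w der zer']
  have a: "lor3 (fst (\<psi> w)) (fst (?D 1)) + lor3 (fst (?D 1)) (fst (\<psi> w)) + 0 = 0" .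
  from zero_up_dir[OF opn C2 w der zer]
  have b: "lor3 (fst (\<psi> w)) (fst (?D \<i>)) + lor3 (fst (?D \<i>)) (fst (\<psi> w)) + 0 = 0" .
  show ?thesis using a b by (simp add: lor3_sym[of "fst (\<psi> w)"])
qed

lemma F6: "w \<in> \<Omega> \<Longrightarrow> Im w = 0 \<Longrightarrow> fst (\<psi>y w) = lor3 (fst (\<psi>y w)) n *\<^sub>R n \<and> snd (\<psi>y w) = 0"
proof -
  assume w: "w \<in> \<Omega>" "Im w = 0"
  have wU: "w \<in> \<Omega> \<inter> {z. Im z \<ge> 0}" using w by simp
  obtain \<eta> where \<eta>: "unit_normal (\<psi> w) (\<psi>x w) (\<psi>y w) \<eta>" "snd \<eta> > 0"
    using cmc wU unfolding cmc_half_def by blast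
  have "\<forall>\<eta>. unit_normal (\<psi> w) (\<psi>x w) (\<psi>y w) \<eta> \<and> snd \<eta> > 0 \<longrightarrow> lor3 (fst \<eta>) n = 0"
    using tang w by blast
  then have tn: "lor3 (fst \<eta>) n = 0" using \<eta> by blast
  have cf0: "\<psi> w \<in> H2R \<and> lor4 (\<psi>x w) (\<psi>y w) = 0 \<and> 0 < lor4 (\<psi>x w) (\<psi>x w)"
    using conf wU unfolding conformal_immersion_def by blast
  then have cf: "\<psi> w \<in> H2R" "lor4 (\<psi>x w) (\<psi>y w) = 0" "0 < lor4 (\<psi>x w) (\<psi>x w)" by auto
  have un: "lor3 (fst \<eta>) (fst (\<psi> w)) = 0" "lor4 \<eta> (\<psi>x w) = 0" "lor4 \<eta> (\<psi>y w) = 0" "lor4 \<eta> \<eta> = 1"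
    using \<eta>(1) by (auto simp: unit_normal_def)
  show ?thesis
    apply (rule F6alg[of "fst (\<psi> w)" n "fst (\<psi>x w)" "fst (\<psi>y w)" "fst \<eta>" "snd (\<psi>x w)" "snd (\<psi>y w)" "snd \<eta>"])
    using H2R_lor[OF cf(1)] n F1[OF w] F4[OF w] F2[OF w] tn cf un by (auto simp: lor4_def)
qed

lemma F7: "w \<in> \<Omega> \<Longrightarrow> Im w = 0 \<Longrightarrow> fst (\<psi>yx w) = lor3 (fst (\<psi>yx w)) n *\<^sub>R n \<and> snd (\<psi>yx w) = 0"
proof -
  assume w: "w \<in> \<Omega>" "Im w = 0"
  let ?P = "\<lambda>p::L4. (fst p - lor3 (fst p) n *\<^sub>R n, snd p)"
  have der: "((\<lambda>w. ?P (\<psi>y w)) has_derivative (\<lambda>v. ?P (Re v *\<^sub>R \<psi>yx w + Im v *\<^sub>R \<psi>yy w))) (at w within \<Omega> \<inter> {z. 0 \<le> Im z})"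
    by (rule bounded_linear.has_derivative[OF bl_Pm D2[OF opn C2]]) (use w in auto)
  have zer: "\<forall>u\<in>\<Omega>. Im u = 0 \<longrightarrow> ?P (\<psi>y u) = 0"
    using F6 by (auto simp: zero_prod_def)
  from zero_real_dir[OF opn C2 w der zer] have P0: "?P (\<psi>yx w) = 0" by simp
  have h1: "fst (\<psi>yx w) - lor3 (fst (\<psi>yx w)) n *\<^sub>R n = 0" using P0 by (metis fst_conv fst_zero)
  have h2: "snd (\<psi>yx w) = 0" using P0 by (metis snd_conv snd_zero)
  show ?thesis using h1 h2 by (simp add: right_minus_eq)
qed

lemma F8: "w \<in> \<Omega> \<Longrightarrow> Im w = 0 \<Longrightarrow> \<psi>xy w = \<psi>yx w"
  using schwarz_at[OF opn C2] by blast

lemma F9: "w \<in> \<Omega> \<Longrightarrow> Im w = 0 \<Longrightarrow> lor3 (fst (\<psi>yy w)) n = 0"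
proof -
  assume w: "w \<in> \<Omega>" "Im w = 0"
  have wU: "w \<in> \<Omega> \<inter> {z. 0 \<le> Im z}" using w by simp
  let ?D1 = "\<lambda>v. Re v *\<^sub>R \<psi>xx w + Im v *\<^sub>R \<psi>xy w"
  let ?D2 = "\<lambda>v. Re v *\<^sub>R \<psi>yx w + Im v *\<^sub>R \<psi>yy w"
  have der: "((\<lambda>w. lor4 (\<psi>x w) (\<psi>x w) - lor4 (\<psi>y w) (\<psi>y w)) has_derivative
      (\<lambda>v. (lor4 (\<psi>x w) (?D1 v) + lor4 (?D1 v) (\<psi>x w)) - (lor4 (\<psi>y w) (?D2 v) + lor4 (?D2 v) (\<psi>y w))))
      (at w within \<Omega> \<inter> {z. 0 \<le> Im z})"
    by (intro has_derivative_diff bounded_bilinear.FDERIV[OF bb_lor4] D1[OF opn C2 wU] D2[OF opn C2 wU])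
  have zer: "\<forall>u\<in>\<Omega> \<inter> {z. 0 \<le> Im z}. lor4 (\<psi>x u) (\<psi>x u) - lor4 (\<psi>y u) (\<psi>y u) = 0"
    using conf by (auto simp: conformal_immersion_def)
  from zero_up_dir[OF opn C2 w der zer] have e: "(lor4 (\<psi>x w) (\<psi>xy w) + lor4 (\<psi>xy w) (\<psi>x w)) - (lor4 (\<psi>y w) (\<psi>yy w) + lor4 (\<psi>yy w) (\<psi>y w)) = 0"
    by simp
  define a where "a = lor3 (fst (\<psi>y w)) n"
  define b where "b = lor3 (fst (\<psi>yx w)) n"
  have y: "fst (\<psi>y w) = a *\<^sub>R n" "snd (\<psi>y w) = 0" using F6[OF w] a_def by auto
  have xy: "fst (\<psi>xy w) = b *\<^sub>R n" "snd (\<psi>xy w) = 0" using F7[OF w] F8[OF w] b_def by auto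
  have x: "lor3 n (fst (\<psi>x w)) = 0" using F2[OF w] lor3_sym by metis
  have "lor4 (\<psi>x w) (\<psi>xy w) = 0" "lor4 (\<psi>xy w) (\<psi>x w) = 0"
    using x xy by (auto simp: lor4_def lor3_sym[of "fst (\<psi>x w)"])
  moreover have "lor4 (\<psi>y w) (\<psi>yy w) = a * lor3 (fst (\<psi>yy w)) n" "lor4 (\<psi>yy w) (\<psi>y w) = a * lor3 (fst (\<psi>yy w)) n"
    using y lor3_sym[of n "fst (\<psi>yy w)"] by (auto simp: lor4_def)
  ultimately have "a * lor3 (fst (\<psi>yy w)) n = 0" using e by simp
  moreover have "a \<noteq> 0"
  proof
    assume "a = 0"
    then have "lor4 (\<psi>y w) (\<psi>y w) = 0" using y by (simp add: lor4_def lor3_alt)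
    moreover have "lor4 (\<psi>x w) (\<psi>x w) = lor4 (\<psi>y w) (\<psi>y w) \<and> 0 < lor4 (\<psi>x w) (\<psi>x w)"
      using conf wU unfolding conformal_immersion_def by blast
    ultimately show False by simp
  qed
  ultimately show ?thesis by simp
qed

lemma bfacts:
  assumes w: "w \<in> \<Omega>" "Im w = 0"
  shows "vrefl n (\<psi> w) = \<psi> w" "vrefl n (\<psi>x w) = \<psi>x w" "- vrefl n (\<psi>y w) = \<psi>y w"
    "vrefl n (\<psi>xx w) = \<psi>xx w" "- vrefl n (\<psi>xy w) = \<psi>xy w" "- vrefl n (\<psi>yx w) = \<psi>yx w"
    "vrefl n (\<psi>yy w) = \<psi>yy w"
  subgoal by (rule vrefl_fix[OF F1[OF w]])
  subgoal by (rule vrefl_fix[OF F2[OF w]])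
  subgoal using F6[OF w] by (intro vrefl_anti[OF n]) auto
  subgoal by (rule vrefl_fix[OF F3[OF w]])
  subgoal unfolding F8[OF w] using F7[OF w] by (intro vrefl_anti[OF n]) auto
  subgoal using F7[OF w] by (intro vrefl_anti[OF n]) auto
  subgoal by (rule vrefl_fix[OF F9[OF w]])
  done

end


definition glue :: "(L4 \<Rightarrow> L4) \<Rightarrow> (complex \<Rightarrow> L4) \<Rightarrow> complex \<Rightarrow> L4" where
  "glue \<tau> f z = (if 0 \<le> Im z then f z else \<tau> (f (cnj z)))"

lemma has_derivative_Un2:
  "(f has_derivative f') (at x within S) \<Longrightarrow> (f has_derivative f') (at x within T) \<Longrightarrow>
   (f has_derivative f') (at x within S \<union> T)"
  by (simp add: has_derivative_within Lim_within_Un)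

lemma has_derivative_nolimpt:
  assumes "bounded_linear f'" "\<not> x islimpt S"
  shows "(f has_derivative f') (at x within S)"
proof -
  have "at x within S = bot" using assms(2) trivial_limit_within[of x S] by (simp add: trivial_limit_def)
  then show ?thesis using assms(1) unfolding has_derivative_within by simp
qed

lemma cnj_real: "Im z = 0 \<Longrightarrow> cnj z = z" by (simp add: complex_eq_iff)

lemma bl_ReIm: "bounded_linear (\<lambda>v::complex. Re v *\<^sub>R a + Im v *\<^sub>R b)"
  unfolding linear_conv_bounded_linear[symmetric]
  by (rule linearI) (auto simp: algebra_simps scaleR_add_left)

lemma not_limpt_half:
  assumes "Im w < 0" shows "\<not> w islimpt (\<Omega> \<inter> {z. 0 \<le> Im z})"
proof
  assume "w islimpt (\<Omega> \<inter> {z. 0 \<le> Im z})"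
  then obtain y where "y \<in> \<Omega> \<inter> {z. 0 \<le> Im z}" "y \<in> {z. Im z < 0}"
    using islimpt_def[of w] open_halfspace_Im_lt[of 0] assms by (metis mem_Collect_eq)
  then show False by simp
qed

lemma not_limpt_half2:
  assumes "Im w > 0" shows "\<not> w islimpt (\<Omega> \<inter> {z. Im z \<le> 0})"
proof
  assume "w islimpt (\<Omega> \<inter> {z. Im z \<le> 0})"
  then obtain y where "y \<in> \<Omega> \<inter> {z. Im z \<le> 0}" "y \<in> {z. Im z > 0}"
    using islimpt_def[of w] open_halfspace_Im_gt[of 0] assms by (metis mem_Collect_eq)
  then show False by simp
qed

context
  fixes \<Omega> :: "complex set"
  assumes sym: "cnj ` \<Omega> = \<Omega>"
begin

lemma cnj_in: "z \<in> \<Omega> \<Longrightarrow> cnj z \<in> \<Omega>" using sym by auto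

lemma glue_cont:
  assumes bl: "bounded_linear \<tau>" and fc: "continuous_on (\<Omega> \<inter> {z. 0 \<le> Im z}) f"
    and m: "\<forall>w\<in>\<Omega>. Im w = 0 \<longrightarrow> \<tau> (f w) = f w"
  shows "continuous_on \<Omega> (glue \<tau> f)"
proof -
  let ?U = "\<Omega> \<inter> {z. 0 \<le> Im z}" and ?D = "\<Omega> \<inter> {z. Im z \<le> 0}"
  have UD: "?U \<union> ?D = \<Omega>" by auto
  have c1: "closedin (top_of_set (?U \<union> ?D)) ?U"
    using closedin_closed_Int[OF closed_halfspace_Im_ge[of 0], of "?U \<union> ?D"] UD by (simp add: Int_commute)
  have c2: "closedin (top_of_set (?U \<union> ?D)) ?D"
    using closedin_closed_Int[OF closed_halfspace_Im_le[of 0], of "?U \<union> ?D"] UD by (simp add: Int_commute)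
  have c3: "continuous_on ?D (\<lambda>z. \<tau> (f (cnj z)))"
  proof (rule continuous_on_compose2[OF linear_continuous_on[OF bl]])
    show "continuous_on ?D (\<lambda>z. f (cnj z))"
      by (rule continuous_on_compose2[OF fc]) (auto intro: continuous_intros cnj_in)
  qed auto
  have "continuous_on (?U \<union> ?D) (\<lambda>z. if 0 \<le> Im z then f z else \<tau> (f (cnj z)))"
    by (rule continuous_on_cases_local[OF c1 c2 fc c3]) (use m in \<open>auto simp: cnj_real\<close>)
  then show ?thesis using UD by (simp add: glue_def[abs_def])
qed

lemma glue_deriv:
  assumes bl: "bounded_linear \<tau>" and t2: "\<And>x. \<tau>2 x = - \<tau> x"
    and fd: "\<And>w. w \<in> \<Omega> \<inter> {z. 0 \<le> Im z} \<Longrightarrow> (f has_derivative (\<lambda>v. Re v *\<^sub>R fx w + Im v *\<^sub>R fy w)) (at w within \<Omega> \<inter> {z. 0 \<le> Im z})"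
    and m: "\<And>w. w\<in>\<Omega> \<Longrightarrow> Im w = 0 \<Longrightarrow> \<tau> (f w) = f w \<and> \<tau> (fx w) = fx w \<and> \<tau>2 (fy w) = fy w"
    and w: "w \<in> \<Omega>"
  shows "(glue \<tau> f has_derivative (\<lambda>v. Re v *\<^sub>R glue \<tau> fx w + Im v *\<^sub>R glue \<tau>2 fy w)) (at w within \<Omega>)"
proof -
  let ?U = "\<Omega> \<inter> {z. 0 \<le> Im z}" and ?D = "\<Omega> \<inter> {z. Im z \<le> 0}"
  let ?G = "\<lambda>v. Re v *\<^sub>R glue \<tau> fx w + Im v *\<^sub>R glue \<tau>2 fy w"
  have UD: "?U \<union> ?D = \<Omega>" by auto
  have a: "(glue \<tau> f has_derivative ?G) (at w within ?U)"
  proof (cases "0 \<le> Im w")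
    case True
    have "(f has_derivative ?G) (at w within ?U)" using fd[of w] w True by (simp add: glue_def)
    then show ?thesis
      by (rule has_derivative_transform_within[OF _ zero_less_one]) (use w True in \<open>auto simp: glue_def\<close>)
  next
    case False
    then show ?thesis by (intro has_derivative_nolimpt bl_ReIm not_limpt_half) auto
  qed
  have b: "(glue \<tau> f has_derivative ?G) (at w within ?D)"
  proof (cases "Im w \<le> 0")
    case True
    have cD: "cnj ` ?D \<subseteq> ?U" using cnj_in by auto
    have cw: "cnj w \<in> ?U" using cD w True by auto
    have "(f has_derivative (\<lambda>v. Re v *\<^sub>R fx (cnj w) + Im v *\<^sub>R fy (cnj w))) (at (cnj w) within cnj ` ?D)"
      using has_derivative_subset[OF fd[OF cw] cD] .
    from diff_chain_within[OF bounded_linear_imp_has_derivative[OF bounded_linear_cnj] this]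
    have "((\<lambda>z. f (cnj z)) has_derivative (\<lambda>v. Re (cnj v) *\<^sub>R fx (cnj w) + Im (cnj v) *\<^sub>R fy (cnj w))) (at w within ?D)"
      by (simp add: o_def)
    from bounded_linear.has_derivative[OF bl this]
    have d: "((\<lambda>z. \<tau> (f (cnj z))) has_derivative (\<lambda>v. \<tau> (Re (cnj v) *\<^sub>R fx (cnj w) + Im (cnj v) *\<^sub>R fy (cnj w)))) (at w within ?D)" .
    have eqG: "(\<lambda>v. \<tau> (Re (cnj v) *\<^sub>R fx (cnj w) + Im (cnj v) *\<^sub>R fy (cnj w))) = ?G"
    proof
      fix v
      have "\<tau> (Re (cnj v) *\<^sub>R fx (cnj w) + Im (cnj v) *\<^sub>R fy (cnj w)) = Re v *\<^sub>R \<tau> (fx (cnj w)) + Im v *\<^sub>R \<tau>2 (fy (cnj w))"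
        by (simp add: linear_add[OF bounded_linear.linear[OF bl]] linear_diff[OF bounded_linear.linear[OF bl]] linear.scaleR[OF bounded_linear.linear[OF bl]] t2)
      also have "\<dots> = ?G v"
      proof (cases "Im w = 0")
        case True
        then have "cnj w = w" by (simp add: complex_eq_iff)
        then show ?thesis using m[OF w True] True by (simp add: glue_def)
      next
        case False
        then show ?thesis using \<open>Im w \<le> 0\<close> by (simp add: glue_def)
      qed
      finally show "\<tau> (Re (cnj v) *\<^sub>R fx (cnj w) + Im (cnj v) *\<^sub>R fy (cnj w)) = ?G v" .
    qed
    show ?thesis
    proof (rule has_derivative_transform_within[OF d[unfolded eqG] zero_less_one])
      show "w \<in> ?D" using w True by simp
      fix x' assume "x' \<in> ?D"
      then show "\<tau> (f (cnj x')) = glue \<tau> f x'"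
      proof (cases "Im x' = 0")
        case True
        then have "cnj x' = x'" by (simp add: complex_eq_iff)
        then show ?thesis using m \<open>x' \<in> ?D\<close> True by (simp add: glue_def)
      next
        case False
        then show ?thesis using \<open>x' \<in> ?D\<close> by (simp add: glue_def)
      qed
    qed
  next
    case False
    then show ?thesis by (intro has_derivative_nolimpt bl_ReIm not_limpt_half2) auto
  qed
  show ?thesis using has_derivative_Un2[OF a b] UD by simp
qed

end


theorem mainTheorem13:
  fixes \<Omega> :: "complex set" and n :: L3
    and \<psi> \<psi>x \<psi>y \<psi>xx \<psi>xy \<psi>yx \<psi>yy :: "complex \<Rightarrow> L4"
  assumes dom: "open \<Omega>" "connected \<Omega>" "\<Omega> \<noteq> {}"
    and sym: "cnj ` \<Omega> = \<Omega>"
    and n: "lor3 n n = 1"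
    and C2: "C2_partials (\<Omega> \<inter> {z. Im z \<ge> 0}) \<psi> \<psi>x \<psi>y \<psi>xx \<psi>xy \<psi>yx \<psi>yy"
    and conf: "conformal_immersion (\<Omega> \<inter> {z. Im z \<ge> 0}) \<psi> \<psi>x \<psi>y"
    and rvp: "regular_vertical_projection (\<Omega> \<inter> {z. Im z \<ge> 0}) \<psi> \<psi>x \<psi>y"
    and cmc: "cmc_half (\<Omega> \<inter> {z. Im z \<ge> 0}) \<psi> \<psi>x \<psi>y \<psi>xx \<psi>yy"
    and bdry: "\<psi> ` (\<Omega> \<inter> {z. Im z = 0}) \<subseteq> vplane n"
    and tang: "\<forall>z \<in> \<Omega> \<inter> {z. Im z = 0}. \<forall>\<eta>.
                 unit_normal (\<psi> z) (\<psi>x z) (\<psi>y z) \<eta> \<and> snd \<eta> > 0 \<longrightarrow> lor3 (fst \<eta>) n = 0"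
  shows "\<exists>\<Phi>x \<Phi>y \<Phi>xx \<Phi>xy \<Phi>yx \<Phi>yy.
           C2_partials \<Omega> (\<lambda>z. if Im z \<ge> 0 then \<psi> z else vrefl n (\<psi> (cnj z)))
                         \<Phi>x \<Phi>y \<Phi>xx \<Phi>xy \<Phi>yx \<Phi>yy \<and>
           conformal_immersion \<Omega> (\<lambda>z. if Im z \<ge> 0 then \<psi> z else vrefl n (\<psi> (cnj z))) \<Phi>x \<Phi>y \<and>
           cmc_half \<Omega> (\<lambda>z. if Im z \<ge> 0 then \<psi> z else vrefl n (\<psi> (cnj z))) \<Phi>x \<Phi>y \<Phi>xx \<Phi>yy"
proof -
  let ?s = "vrefl n" and ?m = "\<lambda>x. - vrefl n x"
  let ?U = "\<Omega> \<inter> {z. 0 \<le> Im z}"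
  have Phi: "(\<lambda>z. if Im z \<ge> 0 then \<psi> z else vrefl n (\<psi> (cnj z))) = glue ?s \<psi>"
    by (simp add: glue_def[abs_def])
  have bls: "bounded_linear ?s" by (rule bl_vrefl)
  have blm: "bounded_linear ?m" by (rule bounded_linear_minus[OF bl_vrefl])
  note bf = bfacts[OF dom(1) n C2 conf cmc bdry tang]
  have cont: "continuous_on ?U \<psi>" "continuous_on ?U \<psi>x" "continuous_on ?U \<psi>y" "continuous_on ?U \<psi>xx"
     "continuous_on ?U \<psi>xy" "continuous_on ?U \<psi>yx" "continuous_on ?U \<psi>yy"
    using C2 by (auto simp: C2_partials_def)
  have C2': "C2_partials \<Omega> (glue ?s \<psi>) (glue ?s \<psi>x) (glue ?m \<psi>y) (glue ?s \<psi>xx) (glue ?m \<psi>xy) (glue ?m \<psi>yx) (glue ?s \<psi>yy)"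
    unfolding C2_partials_def
  proof (intro conjI ballI)
    show "continuous_on \<Omega> (glue ?s \<psi>)" by (rule glue_cont[OF sym bls cont(1)]) (use bf in auto)
    show "continuous_on \<Omega> (glue ?s \<psi>x)" by (rule glue_cont[OF sym bls cont(2)]) (use bf in auto)
    show "continuous_on \<Omega> (glue ?m \<psi>y)" by (rule glue_cont[OF sym blm cont(3)]) (use bf in auto)
    show "continuous_on \<Omega> (glue ?s \<psi>xx)" by (rule glue_cont[OF sym bls cont(4)]) (use bf in auto)
    show "continuous_on \<Omega> (glue ?m \<psi>xy)" by (rule glue_cont[OF sym blm cont(5)]) (use bf in auto)
    show "continuous_on \<Omega> (glue ?m \<psi>yx)" by (rule glue_cont[OF sym blm cont(6)]) (use bf in auto)
    show "continuous_on \<Omega> (glue ?s \<psi>yy)" by (rule glue_cont[OF sym bls cont(7)]) (use bf in auto)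
    fix z assume z: "z \<in> \<Omega>"
    show "(glue ?s \<psi> has_derivative (\<lambda>w. Re w *\<^sub>R glue ?s \<psi>x z + Im w *\<^sub>R glue ?m \<psi>y z)) (at z within \<Omega>)"
      by (rule glue_deriv[OF sym bls _ D0[OF dom(1) C2] _ z]) (use bf in auto)
    show "(glue ?s \<psi>x has_derivative (\<lambda>w. Re w *\<^sub>R glue ?s \<psi>xx z + Im w *\<^sub>R glue ?m \<psi>xy z)) (at z within \<Omega>)"
      by (rule glue_deriv[OF sym bls _ D1[OF dom(1) C2] _ z]) (use bf in auto)
    show "(glue ?m \<psi>y has_derivative (\<lambda>w. Re w *\<^sub>R glue ?m \<psi>yx z + Im w *\<^sub>R glue ?s \<psi>yy z)) (at z within \<Omega>)"
      by (rule glue_deriv[OF sym blm _ D2[OF dom(1) C2] _ z]) (use bf in auto)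
  qed
  have conf': "conformal_immersion \<Omega> (glue ?s \<psi>) (glue ?s \<psi>x) (glue ?m \<psi>y)"
    unfolding conformal_immersion_def
  proof (intro ballI)
    fix z assume z: "z \<in> \<Omega>"
    show "glue ?s \<psi> z \<in> H2R \<and> lor4 (glue ?s \<psi>x z) (glue ?s \<psi>x z) = lor4 (glue ?m \<psi>y z) (glue ?m \<psi>y z) \<and>
          lor4 (glue ?s \<psi>x z) (glue ?m \<psi>y z) = 0 \<and> lor4 (glue ?s \<psi>x z) (glue ?s \<psi>x z) > 0"
    proof (cases "0 \<le> Im z")
      case True
      have "z \<in> ?U" using True z by simp
      then have "\<psi> z \<in> H2R \<and> lor4 (\<psi>x z) (\<psi>x z) = lor4 (\<psi>y z) (\<psi>y z) \<and>
          lor4 (\<psi>x z) (\<psi>y z) = 0 \<and> lor4 (\<psi>x z) (\<psi>x z) > 0"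
        using conf unfolding conformal_immersion_def by blast
      then show ?thesis using True by (simp add: glue_def)
    next
      case False
      let ?w = "cnj z"
      have w: "?w \<in> ?U" using False z sym by auto
      have c: "\<psi> ?w \<in> H2R \<and> lor4 (\<psi>x ?w) (\<psi>x ?w) = lor4 (\<psi>y ?w) (\<psi>y ?w) \<and>
          lor4 (\<psi>x ?w) (\<psi>y ?w) = 0 \<and> lor4 (\<psi>x ?w) (\<psi>x ?w) > 0"
        using conf w unfolding conformal_immersion_def by blast
      then show ?thesis using False vrefl_H2R[OF n] vrefl_lor4[OF n] by (simp add: glue_def)
    qed
  qed
  have cmc': "cmc_half \<Omega> (glue ?s \<psi>) (glue ?s \<psi>x) (glue ?m \<psi>y) (glue ?s \<psi>xx) (glue ?s \<psi>yy)"
    unfolding cmc_half_def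
  proof (intro ballI)
    fix z assume z: "z \<in> \<Omega>"
    show "\<exists>\<eta>. unit_normal (glue ?s \<psi> z) (glue ?s \<psi>x z) (glue ?m \<psi>y z) \<eta> \<and> 0 < snd \<eta> \<and>
        lor4 (glue ?s \<psi>xx z + glue ?s \<psi>yy z) \<eta> / (2 * lor4 (glue ?s \<psi>x z) (glue ?s \<psi>x z)) = 1 / 2"
    proof (cases "0 \<le> Im z")
      case True
      then show ?thesis using cmc z by (simp add: glue_def cmc_half_def)
    next
      case False
      let ?w = "cnj z"
      have w: "?w \<in> ?U" using False z sym by auto
      obtain \<eta> where \<eta>: "unit_normal (\<psi> ?w) (\<psi>x ?w) (\<psi>y ?w) \<eta>" "0 < snd \<eta>"
        "lor4 (\<psi>xx ?w + \<psi>yy ?w) \<eta> / (2 * lor4 (\<psi>x ?w) (\<psi>x ?w)) = 1 / 2"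
        using cmc w unfolding cmc_half_def by blast
      have un: "unit_normal (?s (\<psi> ?w)) (?s (\<psi>x ?w)) (- ?s (\<psi>y ?w)) (?s \<eta>)"
        using \<eta>(1) vrefl_lor3[OF n] vrefl_lor4[OF n] by (simp add: unit_normal_def)
      have "lor4 (?s (\<psi>xx ?w) + ?s (\<psi>yy ?w)) (?s \<eta>) = lor4 (\<psi>xx ?w + \<psi>yy ?w) \<eta>"
        by (simp add: vrefl_add[symmetric] vrefl_lor4[OF n])
      then show ?thesis using False un \<eta>(2,3) vrefl_lor4[OF n]
        by (intro exI[of _ "?s \<eta>"]) (simp add: glue_def)
    qed
  qed
  show ?thesis unfolding Phi using C2' conf' cmc' by blast
qed

end
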